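(* For every standard function $f$ and every $x>0$, $$f(x)\ \ge\ f(0)\,|x-1|,$$ where $f(0):=\lim_{x\to0^+}f(x)$.
   Context: A function $f:(0,\infty)\to(0,\infty)$ is called standard if it is operator monotone, $f(1)=1$ and $f(t)=tf(t^{-1})$ for all $t>0$. (Such $f$ is increasing, so $f(0)=\lim_{x\to0^+}f(x)\ge0$ exists.) *)

theory Defs
  imports Complex_Main "Jordan_Normal_Form.Matrix"
begin

definition adj :: "nat \<Rightarrow> complex mat \<Rightarrow> complex mat" where
  "adj n U = mat n n (\<lambda>(i,j). cnj (U $$ (j,i)))"

definition unitary_mat :: "nat \<Rightarrow> complex mat \<Rightarrow> bool" where
  "unitary_mat n U \<longleftrightarrow> U \<in> carrier_mat n n \<and> U * adj n U = 1\<^sub>m n \<and> adj n U * U = 1\<^sub>m n"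

definition rdiag :: "nat \<Rightarrow> (nat \<Rightarrow> real) \<Rightarrow> complex mat" where
  "rdiag n d = mat n n (\<lambda>(i,j). if i = j then complex_of_real (d i) else 0)"

definition loewner_le :: "nat \<Rightarrow> complex mat \<Rightarrow> complex mat \<Rightarrow> bool" where
  "loewner_le n A B \<longleftrightarrow>
     (\<forall>v \<in> carrier_vec n.
        (let q = (\<Sum>i<n. \<Sum>j<n. cnj (v $ i) * (B $$ (i,j) - A $$ (i,j)) * v $ j)
         in Im q = 0 \<and> Re q \<ge> 0))"

text \<open>Operator monotonicity on (0,\<infinity>): every positive definite matrix is
  U diag(a) U* with U unitary and a > 0, and its functional calculus is
  f(U diag(a) U* ) = U diag(f \<circ> a) U*. f is operator monotone if A \<le> B implies
  f(A) \<le> f(B) for positive definite matrices of every size n.\<close>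
definition operator_monotone :: "(real \<Rightarrow> real) \<Rightarrow> bool" where
  "operator_monotone f \<longleftrightarrow>
     (\<forall>n U V a b. unitary_mat n U \<longrightarrow> unitary_mat n V \<longrightarrow>
        (\<forall>i<n. a i > 0 \<and> b i > 0) \<longrightarrow>
        loewner_le n (U * rdiag n a * adj n U) (V * rdiag n b * adj n V) \<longrightarrow>
        loewner_le n (U * rdiag n (f \<circ> a) * adj n U) (V * rdiag n (f \<circ> b) * adj n V))"

definition standard :: "(real \<Rightarrow> real) \<Rightarrow> bool" where
  "standard f \<longleftrightarrow> (\<forall>t>0. f t > 0) \<and> operator_monotone f \<and> f 1 = 1 \<and>
     (\<forall>t>0. f t = t * f (inverse t))"

end

theory Submission
  imports Defs
begin

lemma one_mat_adj: "adj 1 (1\<^sub>m 1) = 1\<^sub>m 1"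
  unfolding adj_def by (rule eq_matI) auto

lemma standard_mono:
  assumes "operator_monotone f" "0 < s" "s \<le> t"
  shows "f s \<le> f t"
proof -
  have U: "unitary_mat 1 (1\<^sub>m 1)"
    unfolding unitary_mat_def one_mat_adj by simp
  have rd: "\<And>d. 1\<^sub>m 1 * rdiag 1 d * adj 1 (1\<^sub>m 1) = rdiag 1 d"
  proof -
    fix d
    have c: "rdiag 1 d \<in> carrier_mat 1 1" by (simp add: rdiag_def)
    show "1\<^sub>m 1 * rdiag 1 d * adj 1 (1\<^sub>m 1) = rdiag 1 d"
      unfolding one_mat_adj using c by simp
  qed
  have ent: "\<And>d. rdiag 1 d $$ (0,0) = complex_of_real (d 0)"
    unfolding rdiag_def by simp
  have le: "loewner_le 1 (rdiag 1 (\<lambda>_. s)) (rdiag 1 (\<lambda>_. t))"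
    unfolding loewner_le_def Let_def
  proof (intro ballI)
    fix v :: "complex vec"
    have e: "cnj (v $ 0) * (complex_of_real t - complex_of_real s) * v $ 0
        = complex_of_real ((t - s) * (cmod (v $ 0))^2)"
    proof -
      have "cnj (v $ 0) * v $ 0 = complex_of_real ((cmod (v $ 0))^2)"
        using complex_norm_square[of "v $ 0"] by (simp add: mult.commute)
      then show ?thesis by (simp add: algebra_simps)
    qed
    show "Im (\<Sum>i<1. \<Sum>j<1. cnj (v $ i) * (rdiag 1 (\<lambda>_. t) $$ (i, j) - rdiag 1 (\<lambda>_. s) $$ (i, j)) * v $ j) = 0 \<and>
          0 \<le> Re (\<Sum>i<1. \<Sum>j<1. cnj (v $ i) * (rdiag 1 (\<lambda>_. t) $$ (i, j) - rdiag 1 (\<lambda>_. s) $$ (i, j)) * v $ j)"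
    proof -
      have o: "{..<(1::nat)} = {0}" by auto
      have sum0: "\<And>g :: nat \<Rightarrow> complex. (\<Sum>i\<in>{0::nat}. g i) = g 0" by simp
      show ?thesis using assms(3) unfolding o sum0 ent e Re_complex_of_real Im_complex_of_real
        by simp
    qed
  qed
  have "loewner_le 1 (rdiag 1 (f \<circ> (\<lambda>_. s))) (rdiag 1 (f \<circ> (\<lambda>_. t)))"
  proof -
    have "\<forall>i<1. (\<lambda>_. s) i > 0 \<and> (\<lambda>_. t) i > 0" using assms(2,3) by auto
    then have "loewner_le 1 (1\<^sub>m 1 * rdiag 1 (f \<circ> (\<lambda>_. s)) * adj 1 (1\<^sub>m 1)) (1\<^sub>m 1 * rdiag 1 (f \<circ> (\<lambda>_. t)) * adj 1 (1\<^sub>m 1))"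
      using assms(1) U le rd unfolding operator_monotone_def by metis
    then show ?thesis by (simp only: rd)
  qed
  then have h: "Re (\<Sum>i<1. \<Sum>j<1. cnj (vec 1 (\<lambda>_. 1) $ i) * (rdiag 1 (f \<circ> (\<lambda>_. t)) $$ (i,j) - rdiag 1 (f \<circ> (\<lambda>_. s)) $$ (i,j)) * vec 1 (\<lambda>_. 1) $ j) \<ge> 0"
    unfolding loewner_le_def Let_def by (meson vec_carrier)
  have o: "{..<(1::nat)} = {0}" by auto
  have sum0: "\<And>g :: nat \<Rightarrow> complex. (\<Sum>i\<in>{0::nat}. g i) = g 0" by simp
  have v1: "vec 1 (\<lambda>_. 1::complex) $ 0 = 1" by simp
  from h have "Re (complex_of_real (f t) - complex_of_real (f s)) \<ge> 0"
    unfolding o sum0 ent v1 by simp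
  then show ?thesis by simp
qed

theorem lemma4:
  fixes f :: "real \<Rightarrow> real" and x :: real
  assumes "standard f" and "x > 0"
  shows "f x \<ge> Lim (at_right 0) f * \<bar>x - 1\<bar>"
proof -
  have pos: "\<And>t. t > 0 \<Longrightarrow> f t > 0" and om: "operator_monotone f"
    and sym: "\<And>t. t > 0 \<Longrightarrow> f t = t * f (inverse t)"
    using assms(1) unfolding standard_def by blast+
  have mono: "\<And>s t. 0 < s \<Longrightarrow> s \<le> t \<Longrightarrow> f s \<le> f t" using standard_mono om by blast
  define L where "L = Inf (f ` {0<..})"
  have bdd: "bdd_below (f ` {0<..})" using pos by (auto intro!: bdd_belowI[of _ 0] less_imp_le)
  have Lle: "\<And>t. t > 0 \<Longrightarrow> L \<le> f t" unfolding L_def using bdd by (auto intro: cInf_lower)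
  have L0: "L \<ge> 0" unfolding L_def
    by (rule cInf_greatest) (use pos in \<open>auto intro: less_imp_le\<close>)
  have lim: "(f \<longlongrightarrow> L) (at_right 0)"
  proof (rule order_tendstoI)
    fix a assume "a < L"
    show "eventually (\<lambda>y. a < f y) (at_right 0)"
      using eventually_at_right_less[of "0::real"]
      by (rule eventually_mono) (use Lle \<open>a < L\<close> in \<open>fastforce intro: less_le_trans\<close>)
  next
    fix a assume "L < a"
    then obtain t where t: "t > 0" "f t < a"
      unfolding L_def using cInf_lessD[of "f ` {0<..}" a] by auto
    show "eventually (\<lambda>y. f y < a) (at_right 0)"
    proof (rule eventually_mono[OF eventually_at_right_real[OF t(1)]])
      fix y assume "y \<in> {0<..<t}"
      then have "f y \<le> f t" using mono[of y t] by simp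
      then show "f y < a" using t(2) by linarith
    qed
  qed
  have LimL: "Lim (at_right 0) f = L"
    using lim by (intro tendsto_Lim) simp_all
  show ?thesis
  proof (cases "x \<ge> 1")
    case True
    have "f x = x * f (inverse x)" using sym[OF assms(2)] .
    moreover have "f (inverse x) \<ge> L" using Lle[of "inverse x"] assms(2) by simp
    ultimately have "f x \<ge> x * L" using assms(2) by (simp add: mult_left_mono)
    moreover have "\<bar>x - 1\<bar> \<le> x" using True by simp
    then have "L * \<bar>x - 1\<bar> \<le> L * x" using L0 by (rule mult_left_mono)
    ultimately show ?thesis unfolding LimL by (simp add: mult.commute)
  next
    case False
    have "L * \<bar>x - 1\<bar> \<le> L" using False assms(2) L0 by (simp add: mult_left_le)
    moreover have "L \<le> f x" using Lle[OF assms(2)] .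
    ultimately show ?thesis unfolding LimL by linarith
  qed
qed

end
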